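(* Let $f_0(n)=1$ for odd $n$ and $f_0(n)=0$ for even $n$. Then for $1\le k\le n$, $c_1(n,k)$ equals the number of binary words of length $n-1$ with exactly $k-1$ ones that avoid runs of zeros of odd length (every maximal block of consecutive zeros has even length).
   Context: The numbers $c_1(n,k)$, $0\le k\le n$, are defined by $c_1(0,0)=1$, $c_1(n,0)=0$ for $n\ge1$, and $c_1(n,k)=\sum_{i=1}^{n-k+1}f_{0}(i)\,c_1(n-i,k-1)$ for $1\le k\le n$. Words may be empty. *)

theory Defs
  imports Main
begin

definition f0 :: "nat \<Rightarrow> nat" where
  "f0 n = (if odd n then 1 else 0)"

fun c1 :: "nat \<Rightarrow> nat \<Rightarrow> nat" where
  "c1 n 0 = (if n = 0 then 1 else 0)"
| "c1 n (Suc k) = (\<Sum>i = 1..n - Suc k + 1. f0 i * c1 (n - i) k)"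

text \<open>Binary words are lists of booleans; True is a one, False is a zero.
  A maximal run of zeros is a block of positions i..j (inclusive), all zeros,
  not extendable to the left or right.\<close>

definition max_zero_run :: "bool list \<Rightarrow> nat \<Rightarrow> nat \<Rightarrow> bool" where
  "max_zero_run w i j \<longleftrightarrow> i \<le> j \<and> j < length w
     \<and> (\<forall>p. i \<le> p \<and> p \<le> j \<longrightarrow> \<not> w ! p)
     \<and> (i = 0 \<or> w ! (i - 1))
     \<and> (j + 1 = length w \<or> w ! (j + 1))"

definition avoids_odd_zero_runs :: "bool list \<Rightarrow> bool" where
  "avoids_odd_zero_runs w \<longleftrightarrow> (\<forall>i j. max_zero_run w i j \<longrightarrow> even (j - i + 1))"

definition count_ones :: "bool list \<Rightarrow> nat" where
  "count_ones w = length (filter id w)"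

end

theory Submission
  imports Defs
begin

lemma nth_pref: "(replicate m False @ True # w) ! p =
   (if p < m then False else if p = m then True else w ! (p - m - 1))"
  by (auto simp: nth_append nth_Cons' )

lemma mzr_rep: "max_zero_run (replicate m False) i j \<longleftrightarrow> (0 < m \<and> i = 0 \<and> j = m - 1)"
  unfolding max_zero_run_def by (auto simp del: replicate_Suc)

lemma avoids_rep: "avoids_odd_zero_runs (replicate m False) \<longleftrightarrow> even m"
  unfolding avoids_odd_zero_runs_def mzr_rep by auto

lemma mzr_pref: "max_zero_run (replicate m False @ True # w) i j \<longleftrightarrow>
   ((0 < m \<and> i = 0 \<and> j = m - 1) \<or> (m < i \<and> i \<le> j \<and> max_zero_run w (i - m - 1) (j - m - 1)))"
  (is "?L \<longleftrightarrow> ?R")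
proof
  assume L: ?L
  hence ij: "i \<le> j" "j < m + 1 + length w"
    and z: "\<And>p. i \<le> p \<Longrightarrow> p \<le> j \<Longrightarrow> \<not> (replicate m False @ True # w) ! p"
    and l: "i = 0 \<or> (replicate m False @ True # w) ! (i - 1)"
    and r: "j + 1 = m + 1 + length w \<or> (replicate m False @ True # w) ! (j + 1)"
    unfolding max_zero_run_def by auto
  have nm: "\<not> (i \<le> m \<and> m \<le> j)" using z[of m] by (auto simp: nth_pref)
  show ?R
  proof (cases "j < m")
    case True
    hence "i = 0" using l ij by (auto simp: nth_pref split: if_splits)
    moreover have "j = m - 1" using r True by (auto simp: nth_pref split: if_splits)
    ultimately show ?thesis using True by auto
  next
    case False
    hence im: "m < i" using nm ij by auto
    have "max_zero_run w (i - m - 1) (j - m - 1)"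
      unfolding max_zero_run_def
    proof (intro conjI allI impI)
      show "i - m - 1 \<le> j - m - 1" using ij by auto
      show "j - m - 1 < length w" using ij im by auto
      fix p assume "i - m - 1 \<le> p \<and> p \<le> j - m - 1"
      hence "i \<le> p + m + 1" "p + m + 1 \<le> j" using im ij by auto
      hence "\<not> (replicate m False @ True # w) ! (p + m + 1)" using z[of "p+m+1"] by blast
      thus "\<not> w ! p" by (simp add: nth_pref)
    next
      show "i - m - 1 = 0 \<or> w ! (i - m - 1 - 1)" using l im by (auto simp: nth_pref split: if_splits)
      define d where "d = j - m - 1"
      have jd: "j = m + 1 + d" using im ij unfolding d_def by auto
      show "j - m - 1 + 1 = length w \<or> w ! (j - m - 1 + 1)" using r unfolding jd
        by (auto simp: nth_pref)
    qed
    thus ?thesis using im ij by auto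
  qed
next
  assume ?R
  thus ?L
  proof
    assume "0 < m \<and> i = 0 \<and> j = m - 1"
    thus ?L unfolding max_zero_run_def by (auto simp: nth_pref)
  next
    assume a: "m < i \<and> i \<le> j \<and> max_zero_run w (i - m - 1) (j - m - 1)"
    hence b: "i - m - 1 \<le> j - m - 1" "j - m - 1 < length w"
      "\<And>p. i - m - 1 \<le> p \<Longrightarrow> p \<le> j - m - 1 \<Longrightarrow> \<not> w ! p"
      "i - m - 1 = 0 \<or> w ! (i - m - 1 - 1)"
      "j - m - 1 + 1 = length w \<or> w ! (j - m - 1 + 1)"
      unfolding max_zero_run_def by auto
    show ?L unfolding max_zero_run_def
    proof (intro conjI allI impI)
      show "i \<le> j" using a b by auto
      show "j < length (replicate m False @ True # w)" using a b by auto
      fix p assume p: "i \<le> p \<and> p \<le> j"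
      hence "i - m - 1 \<le> p - m - 1" "p - m - 1 \<le> j - m - 1" by auto
      hence "\<not> w ! (p - m - 1)" using b(3) by blast
      thus "\<not> (replicate m False @ True # w) ! p" using a p by (auto simp: nth_pref)
    next
      show "i = 0 \<or> (replicate m False @ True # w) ! (i - 1)" using a b(4)
        by (cases "i = Suc m") (auto simp: nth_pref)
      define d where "d = j - m - 1"
      have jd: "j = m + 1 + d" using a unfolding d_def by auto
      have dd: "d + 1 = length w \<or> w ! (d + 1)" using b(5) unfolding d_def .
      have e1: "(replicate m False @ True # w) ! (j + 1) = w ! (d + 1)"
        unfolding nth_pref jd by simp
      have e2: "length (replicate m False @ True # w) = m + 1 + length w" by simp
      show "j + 1 = length (replicate m False @ True # w) \<or> (replicate m False @ True # w) ! (j + 1)"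
        unfolding e1 e2 using dd jd by linarith
    qed
  qed
qed

lemma avoids_pref: "avoids_odd_zero_runs (replicate m False @ True # w) \<longleftrightarrow>
   even m \<and> avoids_odd_zero_runs w"
proof
  assume A: "avoids_odd_zero_runs (replicate m False @ True # w)"
  have "even m"
  proof (cases m)
    case (Suc m') thus ?thesis using A unfolding avoids_odd_zero_runs_def
      using mzr_pref[of m w 0 "m - 1"] by force
  qed simp
  moreover have "avoids_odd_zero_runs w" unfolding avoids_odd_zero_runs_def
  proof (intro allI impI)
    fix i j assume mw: "max_zero_run w i j"
    hence "i \<le> j" unfolding max_zero_run_def by auto
    hence "max_zero_run (replicate m False @ True # w) (i + m + 1) (j + m + 1)"
      using mzr_pref[of m w "i+m+1" "j+m+1"] mw by auto
    thus "even (j - i + 1)" using A unfolding avoids_odd_zero_runs_def by force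
  qed
  ultimately show "even m \<and> avoids_odd_zero_runs w" by auto
next
  assume H: "even m \<and> avoids_odd_zero_runs w"
  show "avoids_odd_zero_runs (replicate m False @ True # w)"
    unfolding avoids_odd_zero_runs_def
  proof (intro allI impI)
    fix i j assume mz: "max_zero_run (replicate m False @ True # w) i j"
    hence "(0 < m \<and> i = 0 \<and> j = m - 1) \<or> (m < i \<and> i \<le> j \<and> max_zero_run w (i - m - 1) (j - m - 1))"
      by (simp only: mzr_pref)
    thus "even (j - i + 1)"
    proof
      assume "0 < m \<and> i = 0 \<and> j = m - 1" thus ?thesis using H by auto
    next
      assume a: "m < i \<and> i \<le> j \<and> max_zero_run w (i - m - 1) (j - m - 1)"
      hence "even (j - m - 1 - (i - m - 1) + 1)" using H unfolding avoids_odd_zero_runs_def by blast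
      moreover have "i \<le> j" using mz unfolding max_zero_run_def by auto
      ultimately show ?thesis using a by (simp add: algebra_simps)
    qed
  qed
qed

definition Wset :: "nat \<Rightarrow> nat \<Rightarrow> bool list set" where
  "Wset n k = {w. length w = n - 1 \<and> count_ones w = k - 1 \<and> avoids_odd_zero_runs w}"

lemma finite_Wset: "finite (Wset n k)"
proof -
  have "Wset n k \<subseteq> {xs. set xs \<subseteq> UNIV \<and> length xs = n - 1}" unfolding Wset_def by auto
  thus ?thesis using finite_subset finite_lists_length_eq[OF finite_UNIV[where 'a=bool]] by blast
qed

lemma count_pref: "count_ones (replicate m False @ True # w) = Suc (count_ones w)"
  by (simp add: count_ones_def)

lemma count0: "count_ones w = 0 \<Longrightarrow> w = replicate (length w) False"
  by (induct w) (auto simp: count_ones_def split: if_splits)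

lemma decomp: "True \<in> set u \<Longrightarrow> \<exists>a w. u = replicate a False @ True # w"
proof (induct u)
  case (Cons x u)
  show ?case
  proof (cases x)
    case True thus ?thesis by (auto intro!: exI[of _ 0])
  next
    case False
    then obtain a w where "u = replicate a False @ True # w" using Cons by auto
    thus ?thesis using False by (auto intro!: exI[of _ "Suc a"])
  qed
qed simp

lemma pref_inj: "replicate a False @ True # w = replicate b False @ True # w' \<Longrightarrow> a = b \<and> w = w'"
proof (induct a arbitrary: b)
  case 0 thus ?case by (cases b) auto
next
  case (Suc a) thus ?case by (cases b) auto
qed

lemma base: assumes "1 \<le> n" shows "card (Wset n 1) = f0 n"
proof -
  have "Wset n 1 = (if odd n then {replicate (n - 1) False} else {})"
  proof -
    have "w \<in> Wset n 1 \<longleftrightarrow> w = replicate (n - 1) False \<and> odd n" for w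
    proof
      assume "w \<in> Wset n 1"
      hence "length w = n - 1" "count_ones w = 0" "avoids_odd_zero_runs w" unfolding Wset_def by auto
      hence "w = replicate (n - 1) False" "even (n - 1)" using count0 avoids_rep by metis+
      thus "w = replicate (n - 1) False \<and> odd n" using assms by auto
    next
      assume "w = replicate (n - 1) False \<and> odd n"
      thus "w \<in> Wset n 1" using assms unfolding Wset_def by (auto simp: avoids_rep count_ones_def)
    qed
    thus ?thesis by auto
  qed
  thus ?thesis by (simp add: f0_def)
qed

lemma step_set: assumes "1 \<le> k" "Suc k \<le> n"
  shows "Wset n (Suc k) = (\<lambda>(i, w). replicate (i - 1) False @ True # w) `
           (SIGMA i:{i \<in> {1..n-k}. odd i}. Wset (n - i) k)"
proof (rule equalityI)
  show "Wset n (Suc k) \<subseteq> (\<lambda>(i, w). replicate (i - 1) False @ True # w) `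
           (SIGMA i:{i \<in> {1..n-k}. odd i}. Wset (n - i) k)"
  proof
    fix u assume u: "u \<in> Wset n (Suc k)"
    hence "count_ones u = k" by (simp add: Wset_def)
    hence "True \<in> set u" using assms unfolding count_ones_def
      by (metis filter_False id_apply le_zero_eq length_0_conv not_one_le_zero)
    then obtain a w where uw: "u = replicate a False @ True # w" using decomp by blast
    have l: "length w = n - 1 - Suc a" and c: "count_ones w = k - 1" and av: "even a" "avoids_odd_zero_runs w"
      using u unfolding uw Wset_def by (auto simp: count_pref avoids_pref)
    have "count_ones w \<le> length w" unfolding count_ones_def by simp
    moreover have "n - 1 = Suc (a + length w)" using u unfolding uw Wset_def by simp
    ultimately have le: "Suc a \<le> n - k" using l c assms by linarith
    have "(Suc a, w) \<in> (SIGMA i:{i \<in> {1..n-k}. odd i}. Wset (n - i) k)"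
      using le av l c unfolding Wset_def by auto
    moreover have "u = (\<lambda>(i, w). replicate (i - 1) False @ True # w) (Suc a, w)" using uw by simp
    ultimately show "u \<in> (\<lambda>(i, w). replicate (i - 1) False @ True # w) `
           (SIGMA i:{i \<in> {1..n-k}. odd i}. Wset (n - i) k)" by blast
  qed
next
  show "(\<lambda>(i, w). replicate (i - 1) False @ True # w) `
           (SIGMA i:{i \<in> {1..n-k}. odd i}. Wset (n - i) k) \<subseteq> Wset n (Suc k)"
  proof
    fix u assume "u \<in> (\<lambda>(i, w). replicate (i - 1) False @ True # w) `
           (SIGMA i:{i \<in> {1..n-k}. odd i}. Wset (n - i) k)"
    then obtain i w where u: "u = replicate (i - 1) False @ True # w"
      and i: "1 \<le> i" "i \<le> n - k" "odd i" and w: "w \<in> Wset (n - i) k" by auto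
    show "u \<in> Wset n (Suc k)"
      using i w assms unfolding u Wset_def by (auto simp: count_pref avoids_pref)
  qed
qed

lemma main: "1 \<le> k \<Longrightarrow> k \<le> n \<Longrightarrow> c1 n k = card (Wset n k)"
proof (induct k arbitrary: n)
  case 0 thus ?case by simp
next
  case (Suc k n)
  show ?case
  proof (cases "k = 0")
    case True
    have "c1 n (Suc 0) = (\<Sum>i = 1..n. f0 i * (if n - i = 0 then 1 else 0))" using Suc by simp
    also have "\<dots> = (\<Sum>i \<in> {n}. f0 i * (if n - i = 0 then 1 else 0))"
      by (rule sum.mono_neutral_right) (use Suc in auto)
    also have "\<dots> = f0 n" by simp
    finally show ?thesis using True base[of n] Suc by simp
  next
    case False
    hence k1: "1 \<le> k" by simp
    have nk: "n - Suc k + 1 = n - k" using Suc by auto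
    have "c1 n (Suc k) = (\<Sum>i = 1..n - k. f0 i * c1 (n - i) k)" by (simp only: c1.simps nk)
    also have "\<dots> = (\<Sum>i = 1..n - k. f0 i * card (Wset (n - i) k))"
      by (rule sum.cong) (use Suc k1 in auto)
    also have "\<dots> = (\<Sum>i = 1..n - k. if odd i then card (Wset (n - i) k) else 0)"
      by (rule sum.cong) (auto simp: f0_def)
    also have "\<dots> = (\<Sum>i \<in> {i \<in> {1..n-k}. odd i}. card (Wset (n - i) k))"
      using sum.inter_filter[of "{1..n-k}" "\<lambda>i. card (Wset (n - i) k)" odd] by simp
    also have "\<dots> = card (SIGMA i:{i \<in> {1..n-k}. odd i}. Wset (n - i) k)"
      by (simp add: finite_Wset)
    also have "\<dots> = card ((\<lambda>(i, w). replicate (i - 1) False @ True # w) `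
           (SIGMA i:{i \<in> {1..n-k}. odd i}. Wset (n - i) k))"
    proof (rule card_image[symmetric], rule inj_onI)
      fix x y assume x: "x \<in> (SIGMA i:{i \<in> {1..n-k}. odd i}. Wset (n - i) k)"
        and y: "y \<in> (SIGMA i:{i \<in> {1..n-k}. odd i}. Wset (n - i) k)"
        and e: "(\<lambda>(i, w). replicate (i - 1) False @ True # w) x =
                (\<lambda>(i, w). replicate (i - 1) False @ True # w) y"
      obtain i w where xi: "x = (i, w)" by (cases x)
      obtain j w' where yj: "y = (j, w')" by (cases y)
      have ij: "1 \<le> i" "1 \<le> j" using x y xi yj by auto
      have "replicate (i - 1) False @ True # w = replicate (j - 1) False @ True # w'"
        using e xi yj by simp
      hence "i - 1 = j - 1 \<and> w = w'" by (rule pref_inj)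
      hence "i = j" "w = w'" using ij by linarith+
      thus "x = y" using xi yj by simp
    qed
    also have "\<dots> = card (Wset n (Suc k))" using step_set[OF k1] Suc by simp
    finally show ?thesis .
  qed
qed

theorem corollary22:
  fixes n k :: nat
  assumes "1 \<le> k" and "k \<le> n"
  shows "c1 n k = card {w :: bool list. length w = n - 1 \<and> count_ones w = k - 1
                                        \<and> avoids_odd_zero_runs w}"
  using main[OF assms] by (simp add: Wset_def)

end
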